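(* The Steiner point $X_{99}'$ of the cusp triangle $T'=P_1'P_2'P_3'$ is $$X_{99}'=\left(\frac{a^2-2b^2}{a}\cos u,\;-\frac{2a^2-b^2}{b}\sin u\right).$$
   Context: Let $a>b>0$ and $c>0$ with $c^2=a^2-b^2$. Fix $u\in\mathbb{R}$. Let $\Delta_u(t)=(x_u(t),y_u(t))$, where $x_u(t)=\frac1a\big(c^2(1+\cos(t+u))\cos t-a^2\cos u\big)$ and $y_u(t)=\frac1b\big(c^2\cos t\sin(t+u)-c^2\sin t-a^2\sin u\big)$ (the negative pedal curve of the ellipse $x^2/a^2+y^2/b^2=1$ with respect to its point $(a\cos u,b\sin u)$). For $i=1,2,3$ let $t_i=-u/3-2\pi(i-1)/3$ and $P_i'=\Delta_u(t_i)$. The Steiner circumellipse of a triangle is the ellipse through its vertices centered at its centroid; the Steiner point $X_{99}$ of a triangle is the fourth common point (counted with multiplicity) of its circumcircle and its Steiner circumellipse, besides the three vertices. *)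

theory Defs
  imports Complex_Main
begin

definition conic_eval :: "complex \<Rightarrow> real \<Rightarrow> real \<Rightarrow> real \<Rightarrow> complex \<Rightarrow> complex \<Rightarrow> complex" where
  "conic_eval G m11 m12 m22 x y =
     (let X = x - complex_of_real (Re G); Y = y - complex_of_real (Im G) in
      complex_of_real m11 * X^2 + 2 * complex_of_real m12 * X * Y
      + complex_of_real m22 * Y^2 - 1)"

text \<open>Steiner circumellipse: the ellipse centred at the centroid G through A, B, C,
  written as {p. (p-G)^T M (p-G) = 1} with M symmetric positive definite.\<close>
definition steiner_circumellipse :: "complex \<Rightarrow> complex \<Rightarrow> complex \<Rightarrow> real \<Rightarrow> real \<Rightarrow> real \<Rightarrow> bool" where
  "steiner_circumellipse A B C m11 m12 m22 \<longleftrightarrow>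
     m11 > 0 \<and> m11 * m22 - m12^2 > 0 \<and>
     (\<forall>P\<in>{A,B,C}. conic_eval ((A + B + C) / 3) m11 m12 m22
                     (complex_of_real (Re P)) (complex_of_real (Im P)) = 0)"

definition circumcircle :: "complex \<Rightarrow> complex \<Rightarrow> complex \<Rightarrow> complex \<Rightarrow> real \<Rightarrow> bool" where
  "circumcircle A B C Z R \<longleftrightarrow> R > 0 \<and> cmod (A - Z) = R \<and> cmod (B - Z) = R \<and> cmod (C - Z) = R"

text \<open>Steiner point X99: the fourth common point, counted with multiplicity, of the
  circumcircle and the Steiner circumellipse. Multiplicity is made precise by the rational
  parametrisation w \<mapsto> Z + R w of the circumcircle (w on the unit circle; x = Re Z + R (w + 1/w)/2,
  y = Im Z + R (w - 1/w)/(2i)): w^2 times the ellipse equation is a quartic polynomial in w whose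
  roots (with multiplicity) are w1, w2, w3 (the vertices) and w4 (the Steiner point).\<close>
definition steiner_point :: "complex \<Rightarrow> complex \<Rightarrow> complex \<Rightarrow> complex \<Rightarrow> bool" where
  "steiner_point A B C X \<longleftrightarrow> A \<noteq> B \<and> B \<noteq> C \<and> A \<noteq> C \<and>
     (\<exists>Z R m11 m12 m22 w1 w2 w3 w4 k.
        circumcircle A B C Z R \<and> steiner_circumellipse A B C m11 m12 m22 \<and>
        A = Z + complex_of_real R * w1 \<and> B = Z + complex_of_real R * w2 \<and>
        C = Z + complex_of_real R * w3 \<and> X = Z + complex_of_real R * w4 \<and> k \<noteq> 0 \<and>
        (\<forall>w::complex. w \<noteq> 0 \<longrightarrow>
           w^2 * conic_eval ((A + B + C) / 3) m11 m12 m22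
                   (complex_of_real (Re Z) + complex_of_real R * (w + 1/w) / 2)
                   (complex_of_real (Im Z) + complex_of_real R * (w - 1/w) / (2 * \<i>))
           = k * (w - w1) * (w - w2) * (w - w3) * (w - w4)))"

text \<open>The negative pedal curve of the ellipse x^2/a^2+y^2/b^2=1 w.r.t. (a cos u, b sin u).\<close>
definition neg_pedal :: "real \<Rightarrow> real \<Rightarrow> real \<Rightarrow> real \<Rightarrow> complex" where
  "neg_pedal a b u t = (let c2 = a^2 - b^2 in
     Complex ((c2 * (1 + cos (t + u)) * cos t - a^2 * cos u) / a)
             ((c2 * cos t * sin (t + u) - c2 * sin t - a^2 * sin u) / b))"

definition cusp :: "real \<Rightarrow> real \<Rightarrow> real \<Rightarrow> nat \<Rightarrow> complex" where
  "cusp a b u i = neg_pedal a b u (- u / 3 - 2 * pi * (real i - 1) / 3)"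

end

theory Submission imports Defs begin

lemma sin_treble: "sin (3*(x::real)) = 3 * sin x - 4 * sin x ^ 3"
proof -
  have "sin (3*x) = sin (2*x + x)" by simp
  also have "\<dots> = sin (2*x) * cos x + cos (2*x) * sin x" by (rule sin_add)
  also have "\<dots> = 3 * sin x - 4 * sin x ^ 3"
  proof -
    have c: "cos x ^ 2 = 1 - sin x ^ 2" using sin_cos_squared_add[of x] by (simp add: algebra_simps)
    have g: "\<And>C S::real. C^2 = 1 - S^2 \<Longrightarrow> 2*S*C*C + (1 - 2*S^2)*S = 3*S - 4*S^3" by algebra
    show ?thesis unfolding sin_double cos_double_sin using g[OF c] by simp
  qed
  finally show ?thesis .
qed

lemma per2: "cos (x + 2*pi*of_int k) = cos x" "sin (x + 2*pi*of_int k) = sin x"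
  by (simp_all add: cos_add sin_add)

lemma cusp_form:
  fixes a b u t :: real and k :: int
  assumes a: "a \<noteq> 0" and b: "b \<noteq> 0" and k: "3*t + u = -2*pi*of_int k"
  shows "neg_pedal a b u t = Complex (- (a^2+b^2)/(2*a) * cos u + 3*(a^2-b^2)/(2*a) * cos t)
                                     (- (a^2+b^2)/(2*b) * sin u - 3*(a^2-b^2)/(2*b) * sin t)"
proof -
  have u: "u = -3*t + 2*pi*of_int (-k)" using k by simp
  have tu: "t + u = -(2*t) + 2*pi*of_int (-k)" using k by simp
  have cu: "cos u = cos (3*t)" unfolding u per2 by simp
  have su: "sin u = - sin (3*t)" unfolding u per2 by simp
  have ctu: "cos (t+u) = cos (2*t)" unfolding tu per2 by simp
  have stu: "sin (t+u) = - sin (2*t)" unfolding tu per2 by simp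
  have s2: "sin t ^ 2 = 1 - cos t ^ 2" using sin_cos_squared_add[of t] by (simp add: algebra_simps)
  have X: "\<And>C :: real. ((a^2-b^2) * (1 + (2*C^2-1)) * C - a^2 * (4*C^3-3*C)) / a = - (a^2+b^2)/(2*a) * (4*C^3-3*C) + 3*(a^2-b^2)/(2*a) * C"
      using a by (simp add: field_simps) algebra
  have Y: "\<And>C S :: real. S^2 = 1 - C^2 \<Longrightarrow> ((a^2-b^2) * C * (-(2*S*C)) - (a^2-b^2) * S - a^2 * (-(3*S - 4*S^3))) / b = - (a^2+b^2)/(2*b) * (-(3*S - 4*S^3)) - 3*(a^2-b^2)/(2*b) * S"
      using b by (simp add: field_simps) algebra
  show ?thesis unfolding neg_pedal_def Let_def ctu stu cu su cos_treble_cos sin_treble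
      cos_double_cos sin_double complex_eq_iff using X Y[OF s2] by simp
qed
lemma quartic:
  fixes c0 c1 c2 c3 c4 w1 w2 w3 :: complex
  assumes c4: "c4 \<noteq> 0" and d: "w1 \<noteq> w2" "w1 \<noteq> w3" "w2 \<noteq> w3"
    and r1: "c4*w1^4 + c3*w1^3 + c2*w1^2 + c1*w1 + c0 = 0"
    and r2: "c4*w2^4 + c3*w2^3 + c2*w2^2 + c1*w2 + c0 = 0"
    and r3: "c4*w3^4 + c3*w3^3 + c2*w3^2 + c1*w3 + c0 = 0"
  defines "r \<equiv> - c3/c4 - (w1+w2+w3)"
  shows "c4*w^4 + c3*w^3 + c2*w^2 + c1*w + c0 = c4 * (w-w1)*(w-w2)*(w-w3)*(w-r)"
proof -
  define e2 where "e2 = c2 - c4*(w1*w2+w1*w3+w2*w3 + r*(w1+w2+w3))"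
  define e1 where "e1 = c1 + c4*(w1*w2*w3 + r*(w1*w2+w1*w3+w2*w3))"
  define e0 where "e0 = c0 - c4*(w1*w2*w3*r)"
  have c3: "c3 = - c4 * (r + w1 + w2 + w3)" using c4 unfolding r_def by (simp add: field_simps)
  have E: "\<And>z. c4*z^4 + c3*z^3 + c2*z^2 + c1*z + c0 - c4 * (z-w1)*(z-w2)*(z-w3)*(z-r)
      = e2*z^2 + e1*z + e0"
    unfolding e2_def e1_def e0_def c3 by algebra
  have z1: "e2*w1^2 + e1*w1 + e0 = 0" using E[of w1] r1 by simp
  have z2: "e2*w2^2 + e1*w2 + e0 = 0" using E[of w2] r2 by simp
  have z3: "e2*w3^2 + e1*w3 + e0 = 0" using E[of w3] r3 by simp
  have "(w1 - w2) * (e2*(w1+w2) + e1) = (e2*w1^2 + e1*w1 + e0) - (e2*w2^2 + e1*w2 + e0)" by algebra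
  hence b12: "e2*(w1+w2) + e1 = 0" using d z1 z2 by simp
  have "(w1 - w3) * (e2*(w1+w3) + e1) = (e2*w1^2 + e1*w1 + e0) - (e2*w3^2 + e1*w3 + e0)" by algebra
  hence b13: "e2*(w1+w3) + e1 = 0" using d z1 z3 by simp
  have "e2 * (w2 - w3) = (e2*(w1+w2) + e1) - (e2*(w1+w3) + e1)" by algebra
  hence "e2 = 0" using d b12 b13 by simp
  hence "e1 = 0" using b12 by simp
  hence "e0 = 0" using z1 \<open>e2 = 0\<close> by simp
  show ?thesis using E[of w] \<open>e2 = 0\<close> \<open>e1 = 0\<close> \<open>e0 = 0\<close> by simp
qed
lemma Fexp:
  fixes G dx dy :: complex and m11 m22 Zx Zy R :: real and w :: complex
  assumes "w \<noteq> 0"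
  defines "dx \<equiv> complex_of_real (Zx - Re G)" and "dy \<equiv> complex_of_real (Zy - Im G)"
  shows "w^2 * conic_eval G m11 0 m22 (complex_of_real Zx + complex_of_real R * (w + 1/w) / 2)
                 (complex_of_real Zy + complex_of_real R * (w - 1/w) / (2 * \<i>))
   = (R^2*(m11-m22)/4) * w^4 + (R*(m11*dx - \<i>*m22*dy)) * w^3
     + (m11*(dx^2 + R^2/2) + m22*(dy^2+R^2/2) - 1) * w^2 + (R*(m11*dx + \<i>*m22*dy)) * w + R^2*(m11-m22)/4"
  using assms(1) unfolding conic_eval_def Let_def dx_def dy_def
  by (simp add: field_simps power2_eq_square power3_eq_cube power4_eq_xxxx)

lemma on_circle:
  fixes P Z :: complex and R :: real
  assumes "cmod (P - Z) = R" "R > 0"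
  defines "w \<equiv> (P - Z) / complex_of_real R"
  shows "complex_of_real (Re Z) + complex_of_real R * (w + 1/w) / 2 = complex_of_real (Re P)"
    and "complex_of_real (Im Z) + complex_of_real R * (w - 1/w) / (2*\<i>) = complex_of_real (Im P)"
proof -
  have n: "cmod w = 1" using assms unfolding w_def by (simp add: norm_divide)
  have "w * cnj w = 1" using complex_norm_square[of w] n by simp
  hence iw: "1/w = cnj w" by (metis nonzero_mult_div_cancel_left divide_self_if mult_zero_left zero_neq_one)
  have P: "P = Z + complex_of_real R * w" using assms unfolding w_def by simp
  show "complex_of_real (Re Z) + complex_of_real R * (w + 1/w) / 2 = complex_of_real (Re P)"
    unfolding iw complex_add_cnj P by (simp add: complex_eq_iff)
  show "complex_of_real (Im Z) + complex_of_real R * (w - 1/w) / (2*\<i>) = complex_of_real (Im P)"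
    unfolding iw complex_diff_cnj P by (simp add: complex_eq_iff)
qed


definition "Af a b = 3*(a^2-b^2)/(2*a)"
definition "Bf a b = 3*(a^2-b^2)/(2*b)"
definition "Oxf a b u = - (a^2+b^2)/(2*a) * cos u"
definition "Oyf a b u = - (a^2+b^2)/(2*b) * sin u"
definition "pf a b u = ((Af a b)^2 - (Bf a b)^2) * cos u / (4 * Af a b)"
definition "qf a b u = ((Af a b)^2 - (Bf a b)^2) * sin u / (4 * Bf a b)"
definition "Rf a b u = sqrt (((Af a b)^2 + (Bf a b)^2)/2 + (pf a b u)^2 + (qf a b u)^2)"
definition "Zf a b u = Complex (Oxf a b u + pf a b u) (Oyf a b u + qf a b u)"

lemma point:
  fixes a b u t :: real and k :: int
  assumes a: "a > b" "b > 0" and k: "3*t + u = -2*pi*of_int k"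
  shows "neg_pedal a b u t = Complex (Oxf a b u + Af a b * cos t) (Oyf a b u - Bf a b * sin t)"
    and "cmod (neg_pedal a b u t - Zf a b u) = Rf a b u"
    and "conic_eval (Complex (Oxf a b u) (Oyf a b u)) (1/(Af a b)^2) 0 (1/(Bf a b)^2)
           (complex_of_real (Re (neg_pedal a b u t))) (complex_of_real (Im (neg_pedal a b u t))) = 0"
proof -
  have a0: "a \<noteq> 0" "b \<noteq> 0" using a by auto
  have A0: "Af a b \<noteq> 0" "Bf a b \<noteq> 0" using a unfolding Af_def Bf_def by auto
  show P: "neg_pedal a b u t = Complex (Oxf a b u + Af a b * cos t) (Oyf a b u - Bf a b * sin t)"
    unfolding cusp_form[OF a0 k] Oxf_def Oyf_def Af_def Bf_def by (simp add: field_simps)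
  have u: "u = -3*t + 2*pi*of_int (-k)" using k by simp
  have cu: "cos u = cos (3*t)" unfolding u per2 by simp
  have su: "sin u = - sin (3*t)" unfolding u per2 by simp
  have s2: "sin t ^ 2 = 1 - cos t ^ 2" using sin_cos_squared_add[of t] by (simp add: algebra_simps)
  have key: "\<And>A B C S :: real. A \<noteq> 0 \<Longrightarrow> B \<noteq> 0 \<Longrightarrow> S^2 = 1 - C^2 \<Longrightarrow>
     (A * C - (A^2-B^2)*(4*C^3-3*C)/(4*A))^2 + (B * S + (A^2-B^2)*(-(3*S-4*S^3))/(4*B))^2
     = (A^2+B^2)/2 + ((A^2-B^2)*(4*C^3-3*C)/(4*A))^2 + ((A^2-B^2)*(-(3*S-4*S^3))/(4*B))^2"
    by (simp add: field_simps) algebra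
  have "(Af a b * cos t - pf a b u)^2 + (Bf a b * sin t + qf a b u)^2
     = ((Af a b)^2 + (Bf a b)^2)/2 + (pf a b u)^2 + (qf a b u)^2"
    unfolding pf_def qf_def cu su cos_treble_cos sin_treble using key[OF A0 s2] by simp
  thus "cmod (neg_pedal a b u t - Zf a b u) = Rf a b u"
    unfolding P Zf_def Rf_def cmod_def by (simp add: power2_eq_square algebra_simps)
  show "conic_eval (Complex (Oxf a b u) (Oyf a b u)) (1/(Af a b)^2) 0 (1/(Bf a b)^2)
           (complex_of_real (Re (neg_pedal a b u t))) (complex_of_real (Im (neg_pedal a b u t))) = 0"
    unfolding P conic_eval_def Let_def using A0 sin_cos_squared_add[of t]
    apply (simp add: field_simps power2_eq_square flip: of_real_mult of_real_add of_real_diff)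
    apply (metis (no_types, lifting) distrib_right mult.assoc mult_1 power2_eq_square sin_cos_squared_add add.commute)
    done
qed

lemma trig3:
  fixes u :: real
  defines "C \<equiv> cos (-u/3)" and "S \<equiv> sin (-u/3)"
  shows "cos (-u/3 - 2*pi*1/3) = -C/2 + sqrt 3/2*S" "sin (-u/3 - 2*pi*1/3) = -S/2 - sqrt 3/2*C"
        "cos (-u/3 - 2*pi*2/3) = -C/2 - sqrt 3/2*S" "sin (-u/3 - 2*pi*2/3) = -S/2 + sqrt 3/2*C"
proof -
  have e: "2*pi*2/3 = pi + pi/3" by simp
  show "cos (-u/3 - 2*pi*1/3) = -C/2 + sqrt 3/2*S" "sin (-u/3 - 2*pi*1/3) = -S/2 - sqrt 3/2*C"
    unfolding C_def S_def cos_diff sin_diff by (simp_all add: cos_120 sin_120)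
  show "cos (-u/3 - 2*pi*2/3) = -C/2 - sqrt 3/2*S" "sin (-u/3 - 2*pi*2/3) = -S/2 + sqrt 3/2*C"
    unfolding C_def S_def cos_diff sin_diff e cos_add sin_add by (simp_all add: cos_60 sin_60)
qed

lemma Xfinal:
  fixes a b u A B R m11 m22 :: real and dx dy :: complex
  assumes a: "a > b" "b > 0"
  defines "A \<equiv> Af a b" and "B \<equiv> Bf a b" and "R \<equiv> Rf a b u"
  defines "m11 \<equiv> 1/A^2" and "m22 \<equiv> 1/B^2"
  defines "dx \<equiv> complex_of_real (pf a b u)" and "dy \<equiv> complex_of_real (qf a b u)"
  assumes R: "R \<noteq> 0"
  shows "Zf a b u + complex_of_real R * (- (R*(m11*dx - \<i>*m22*dy)) / (R^2*(m11-m22)/4)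
           - 3 * (Complex (Oxf a b u) (Oyf a b u) - Zf a b u) / complex_of_real R)
   = Complex ((a^2 - 2 * b^2) / a * cos u) (- (2 * a^2 - b^2) / b * sin u)"
proof -
  have a0: "a \<noteq> 0" "b \<noteq> 0" "a^2 - b^2 \<noteq> 0" "a^2+b^2 \<noteq> 0" using a by auto
  define K where "K = a^2 - b^2"
  have K0: "K \<noteq> 0" using a0 unfolding K_def by simp
  have AK: "A = 3*K/(2*a)" "B = 3*K/(2*b)" unfolding A_def B_def Af_def Bf_def K_def by simp_all
  have mv: "m11 - m22 = 4/(9*K)" unfolding m11_def m22_def AK using a0(1,2) K0
    by (simp add: field_simps power2_eq_square) (unfold K_def, algebra)
  have m: "m11 - m22 \<noteq> 0" unfolding mv using K0 by simp
  have "Zf a b u + complex_of_real R * (- (R*(m11*dx - \<i>*m22*dy)) / (R^2*(m11-m22)/4)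
           - 3 * (Complex (Oxf a b u) (Oyf a b u) - Zf a b u) / complex_of_real R)
    = Zf a b u - 4*(m11*dx - \<i>*m22*dy)/(m11-m22) - 3 * (Complex (Oxf a b u) (Oyf a b u) - Zf a b u)"
    using R m by (simp add: field_simps power2_eq_square)
  also have "\<dots> = Complex (Oxf a b u + 4 * pf a b u - 4*m11*pf a b u/(m11-m22))
                             (Oyf a b u + 4 * qf a b u + 4*m22*qf a b u/(m11-m22))"
    unfolding complex_eq_iff Zf_def dx_def dy_def using m by (simp add: field_simps)
  also have "\<dots> = Complex ((a^2 - 2 * b^2) / a * cos u) (- (2 * a^2 - b^2) / b * sin u)"
  proof -
    have AB: "A^2 - B^2 = -9*K^3/(4*a^2*b^2)" unfolding AK using a0(1,2) K0
      by (simp add: field_simps power2_eq_square power3_eq_cube) (unfold K_def, algebra)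
    have pv: "pf a b u = -3*K^2*cos u/(8*a*b^2)"
      unfolding pf_def A_def[symmetric] B_def[symmetric] AB unfolding AK using a0(1,2) K0
      by (simp add: field_simps power2_eq_square power3_eq_cube)
    have qv: "qf a b u = -3*K^2*sin u/(8*a^2*b)"
      unfolding qf_def A_def[symmetric] B_def[symmetric] AB unfolding AK using a0(1,2) K0
      by (simp add: field_simps power2_eq_square power3_eq_cube)
    have m1: "m11 = 4*a^2/(9*K^2)" "m22 = 4*b^2/(9*K^2)" unfolding m11_def m22_def AK using a0(1,2) K0
      by (simp_all add: field_simps power2_eq_square)
    have re: "Oxf a b u + 4 * pf a b u - 4*m11*pf a b u/(m11-m22) = (a^2 - 2 * b^2) / a * cos u"
      unfolding mv unfolding m1 pv Oxf_def using a0(1,2) K0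
      by (simp add: field_simps power2_eq_square) (unfold K_def, algebra)
    have im: "Oyf a b u + 4 * qf a b u + 4*m22*qf a b u/(m11-m22) = - (2 * a^2 - b^2) / b * sin u"
      unfolding mv unfolding m1 qv Oyf_def using a0(1,2) K0
      by (simp add: field_simps power2_eq_square) (unfold K_def, algebra)
    show ?thesis using re im by simp
  qed
  finally show ?thesis .
qed

lemma dist_aux:
  fixes C S s :: real
  assumes cs: "C^2 + S^2 = 1" and s3: "s^2 = 3"
  shows "\<not> (C = -C/2 + s/2*S \<and> S = -S/2 - s/2*C)"
    and "\<not> (C = -C/2 - s/2*S \<and> S = -S/2 + s/2*C)"
    and "\<not> (-C/2 + s/2*S = -C/2 - s/2*S \<and> -S/2 - s/2*C = -S/2 + s/2*C)"
proof -
  have i: "3*(C^2+S^2) = C*(3*C - s*S) + S*(3*S + s*C)" by algebra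
  have j: "3*(C^2+S^2) = C*(3*C + s*S) + S*(3*S - s*C)" by algebra
  have k: "(C^2+S^2) = C*C + S*S" by algebra
  show "\<not> (C = -C/2 + s/2*S \<and> S = -S/2 - s/2*C)"
  proof
    assume h: "C = -C/2 + s/2*S \<and> S = -S/2 - s/2*C"
    hence "3*C - s*S = 0" "3*S + s*C = 0" by (simp_all add: field_simps)
    thus False using i cs by simp
  qed
  show "\<not> (C = -C/2 - s/2*S \<and> S = -S/2 + s/2*C)"
  proof
    assume h: "C = -C/2 - s/2*S \<and> S = -S/2 + s/2*C"
    hence "3*C + s*S = 0" "3*S - s*C = 0" by (simp_all add: field_simps)
    thus False using j cs by simp
  qed
  show "\<not> (-C/2 + s/2*S = -C/2 - s/2*S \<and> -S/2 - s/2*C = -S/2 + s/2*C)"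
  proof
    assume h: "-C/2 + s/2*S = -C/2 - s/2*S \<and> -S/2 - s/2*C = -S/2 + s/2*C"
    hence "s*S = 0" "s*C = 0" by (simp_all add: field_simps)
    moreover have "s \<noteq> 0" using s3 by auto
    ultimately show False using cs k by simp
  qed
qed

lemma mm_lemma:
  fixes a b :: real
  assumes "a > b" "b > 0"
  shows "1/(Af a b)^2 - 1/(Bf a b)^2 \<noteq> 0"
proof -
  have a0: "a \<noteq> 0" "b \<noteq> 0" "a^2 - b^2 \<noteq> 0" using assms by auto
  define K where "K = a^2 - b^2"
  have K0: "K \<noteq> 0" using a0 unfolding K_def by simp
  have AK: "Af a b = 3*K/(2*a)" "Bf a b = 3*K/(2*b)" unfolding Af_def Bf_def K_def by simp_all
  have mv: "1/(Af a b)^2 - 1/(Bf a b)^2 = 4/(9*K)" unfolding AK using a0(1,2) K0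
    by (simp add: field_simps power2_eq_square) (unfold K_def, algebra)
  show ?thesis unfolding mv using K0 by simp
qed

theorem proposition4p4:
  fixes a b c u :: real
  assumes "a > b" "b > 0" "c > 0" "c^2 = a^2 - b^2"
  shows "steiner_point (cusp a b u 1) (cusp a b u 2) (cusp a b u 3)
           (Complex ((a^2 - 2 * b^2) / a * cos u) (- (2 * a^2 - b^2) / b * sin u))"
proof -
  have ab: "a > b" "b > 0" using assms by auto
  define t1 where "t1 = -u/3"
  define t2 where "t2 = -u/3 - 2*pi*1/3"
  define t3 where "t3 = -u/3 - 2*pi*2/3"
  have c1: "cusp a b u 1 = neg_pedal a b u t1" unfolding cusp_def t1_def by simp
  have c2: "cusp a b u 2 = neg_pedal a b u t2" unfolding cusp_def t2_def by simp
  have c3: "cusp a b u 3 = neg_pedal a b u t3" unfolding cusp_def t3_def by simp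
  have k1: "3*t1 + u = -2*pi*of_int 0" unfolding t1_def by simp
  have k2: "3*t2 + u = -2*pi*of_int 1" unfolding t2_def by simp
  have k3: "3*t3 + u = -2*pi*of_int 2" unfolding t3_def by simp
  define A where "A = Af a b"
  define B where "B = Bf a b"
  define Ox where "Ox = Oxf a b u"
  define Oy where "Oy = Oyf a b u"
  define Z where "Z = Zf a b u"
  define R where "R = Rf a b u"
  define P1 where "P1 = cusp a b u 1"
  define P2 where "P2 = cusp a b u 2"
  define P3 where "P3 = cusp a b u 3"
  have A0: "A \<noteq> 0" "B \<noteq> 0" using ab unfolding A_def B_def Af_def Bf_def by auto
  note pt1 = point[OF ab k1, folded c1 P1_def A_def B_def Ox_def Oy_def Z_def R_def]
  note pt2 = point[OF ab k2, folded c2 P2_def A_def B_def Ox_def Oy_def Z_def R_def]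
  note pt3 = point[OF ab k3, folded c3 P3_def A_def B_def Ox_def Oy_def Z_def R_def]
  define C where "C = cos (-u/3)"
  define S where "S = sin (-u/3)"
  have CS: "C^2 + S^2 = 1" unfolding C_def S_def by simp
  have s3: "sqrt 3 ^ 2 = (3::real)" by simp
  note tr = trig3[of u, folded C_def S_def t2_def t3_def]
  have ct1: "cos t1 = C" "sin t1 = S" unfolding t1_def C_def S_def by auto
  have G: "(P1 + P2 + P3) / 3 = Complex Ox Oy"
    unfolding pt1(1) pt2(1) pt3(1) complex_eq_iff ct1 tr by (simp add: algebra_simps)
  have d12: "P1 \<noteq> P2"
  proof
    assume "P1 = P2"
    hence "A * cos t1 = A * cos t2" "B * sin t1 = B * sin t2"
      unfolding pt1(1) pt2(1) by auto
    hence "cos t1 = cos t2" "sin t1 = sin t2" using A0 by auto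
    thus False using dist_aux(1)[OF CS s3] unfolding ct1 tr by auto
  qed
  have d13: "P1 \<noteq> P3"
  proof
    assume "P1 = P3"
    hence "A * cos t1 = A * cos t3" "B * sin t1 = B * sin t3"
      unfolding pt1(1) pt3(1) by auto
    hence "cos t1 = cos t3" "sin t1 = sin t3" using A0 by auto
    thus False using dist_aux(2)[OF CS s3] unfolding ct1 tr by auto
  qed
  have d23: "P2 \<noteq> P3"
  proof
    assume "P2 = P3"
    hence "A * cos t2 = A * cos t3" "B * sin t2 = B * sin t3"
      unfolding pt2(1) pt3(1) by auto
    hence "cos t2 = cos t3" "sin t2 = sin t3" using A0 by auto
    thus False using dist_aux(3)[OF CS s3] unfolding tr by auto
  qed
  have R0: "R > 0" unfolding R_def Rf_def A_def[symmetric] B_def[symmetric] using A0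
    by (intro real_sqrt_gt_zero add_pos_nonneg) (auto intro: add_pos_pos)
  define m11 where "m11 = 1/A^2"
  define m22 where "m22 = 1/B^2"
  have sq: "0 < A*A" "0 < B*B" using A0 by (auto simp: zero_less_mult_iff)
  have ell: "steiner_circumellipse P1 P2 P3 m11 0 m22"
    unfolding steiner_circumellipse_def G m11_def m22_def using pt1(3) pt2(3) pt3(3) A0
    by (simp add: power2_eq_square sq mult_pos_pos)
  have circ: "circumcircle P1 P2 P3 Z R"
    unfolding circumcircle_def using R0 pt1(2) pt2(2) pt3(2) by simp
  define w1 where "w1 = (P1 - Z) / complex_of_real R"
  define w2 where "w2 = (P2 - Z) / complex_of_real R"
  define w3 where "w3 = (P3 - Z) / complex_of_real R"
  define dx where "dx = complex_of_real (Re Z - Re (Complex Ox Oy))"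
  define dy where "dy = complex_of_real (Im Z - Im (Complex Ox Oy))"
  define k4 where "k4 = complex_of_real (R^2*(m11-m22)/4)"
  define k3 where "k3 = (R*(m11*dx - \<i>*m22*dy))"
  define k2 where "k2 = (m11*(dx^2 + R^2/2) + m22*(dy^2+R^2/2) - 1)"
  define k1 where "k1 = (R*(m11*dx + \<i>*m22*dy))"
  define k0 where "k0 = complex_of_real (R^2*(m11-m22)/4)"
  define F where "F = (\<lambda>w. w^2 * conic_eval (Complex Ox Oy) m11 0 m22 (complex_of_real (Re Z) + complex_of_real R * (w + 1/w) / 2)
                 (complex_of_real (Im Z) + complex_of_real R * (w - 1/w) / (2 * \<i>)))"
  have Fe: "\<And>w. w \<noteq> 0 \<Longrightarrow> F w = k4*w^4 + k3*w^3 + k2*w^2 + k1*w + k0"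
    unfolding F_def k4_def k3_def k2_def k1_def k0_def dx_def dy_def
    by (subst Fexp) simp_all
  have mm: "m11 - m22 \<noteq> 0" unfolding m11_def m22_def A_def B_def using mm_lemma[OF ab] .
  have k40: "k4 \<noteq> 0" unfolding k4_def using mm R0 by simp
  have wroot: "F w = 0" "w \<noteq> 0" if "cmod (P - Z) = R" "w = (P - Z) / complex_of_real R"
    "conic_eval (Complex Ox Oy) m11 0 m22 (complex_of_real (Re P)) (complex_of_real (Im P)) = 0" for P w
  proof -
    show "w \<noteq> 0" using that(1,2) R0 by auto
    show "F w = 0" unfolding F_def on_circle[OF that(1) R0, folded that(2)] that(3) by simp
  qed
  have r1: "F w1 = 0" "w1 \<noteq> 0" using wroot[OF pt1(2) w1_def] pt1(3) unfolding m11_def m22_def by auto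
  have r2: "F w2 = 0" "w2 \<noteq> 0" using wroot[OF pt2(2) w2_def] pt2(3) unfolding m11_def m22_def by auto
  have r3: "F w3 = 0" "w3 \<noteq> 0" using wroot[OF pt3(2) w3_def] pt3(3) unfolding m11_def m22_def by auto
  have dw: "w1 \<noteq> w2" "w1 \<noteq> w3" "w2 \<noteq> w3" using d12 d13 d23 R0 unfolding w1_def w2_def w3_def
    by (auto simp: divide_simps)
  define r where "r = - k3/k4 - (w1+w2+w3)"
  have Q: "\<And>w. w \<noteq> 0 \<Longrightarrow> F w = k4 * (w-w1)*(w-w2)*(w-w3)*(w-r)"
    unfolding r_def using quartic[OF k40 dw] Fe r1 r2 r3 by metis
  have X: "Complex ((a^2 - 2 * b^2) / a * cos u) (- (2 * a^2 - b^2) / b * sin u) = Z + complex_of_real R * r"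
  proof -
    have s: "w1 + w2 + w3 = 3 * (Complex Ox Oy - Z) / complex_of_real R"
      unfolding w1_def w2_def w3_def G[symmetric] using R0 by (simp add: field_simps)
    have dxy: "dx = complex_of_real (pf a b u)" "dy = complex_of_real (qf a b u)"
      unfolding dx_def dy_def Z_def Zf_def Ox_def Oy_def by simp_all
    show ?thesis unfolding r_def s k3_def k4_def dxy
      unfolding m11_def m22_def A_def B_def Z_def R_def Ox_def Oy_def
      using Xfinal[OF ab, of u] R0[unfolded R_def] by simp
  qed
  show ?thesis unfolding P1_def[symmetric] P2_def[symmetric] P3_def[symmetric] steiner_point_def
  proof (intro conjI d12 d23 d13)
    show "\<exists>Z R m11 m12 m22 w1 w2 w3 w4 k.
        circumcircle P1 P2 P3 Z R \<and> steiner_circumellipse P1 P2 P3 m11 m12 m22 \<and>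
        P1 = Z + complex_of_real R * w1 \<and> P2 = Z + complex_of_real R * w2 \<and>
        P3 = Z + complex_of_real R * w3 \<and> Complex ((a^2 - 2 * b^2) / a * cos u) (- (2 * a^2 - b^2) / b * sin u) = Z + complex_of_real R * w4 \<and> k \<noteq> 0 \<and>
        (\<forall>w::complex. w \<noteq> 0 \<longrightarrow>
           w^2 * conic_eval ((P1 + P2 + P3) / 3) m11 m12 m22
                   (complex_of_real (Re Z) + complex_of_real R * (w + 1/w) / 2)
                   (complex_of_real (Im Z) + complex_of_real R * (w - 1/w) / (2 * \<i>))
           = k * (w - w1) * (w - w2) * (w - w3) * (w - w4))"
      apply (rule exI[of _ Z], rule exI[of _ R], rule exI[of _ m11], rule exI[of _ 0], rule exI[of _ m22])
      apply (rule exI[of _ w1], rule exI[of _ w2], rule exI[of _ w3], rule exI[of _ r], rule exI[of _ k4])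
      using circ ell X k40 Q R0 unfolding G F_def w1_def w2_def w3_def by auto
  qed
qed
end
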